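(* Let $r(x)$ and $s(x)$ be $\Sigma_m$-terms whose only variable (if any) is $x$, interpreted in $Q_0$. If $r(q)=s(q)$ for infinitely many rationals $q$, then $r(q)\neq s(q)$ for only finitely many rationals $q$.
   Context: $\Sigma_m=(0,1,+,\cdot,-,{}^{-1})$. $Q_0$ is the field of rational numbers with its usual $0,1,+,\cdot,-$ and with the total inverse defined by $q^{-1}=1/q$ for $q\neq 0$ and $0^{-1}=0$. (In the paper: $r\equiv_\infty s$ means agreement at infinitely many rationals, $r\equiv_{ae} s$ means disagreement at only finitely many rationals, and the claim is $r\equiv_\infty s\Rightarrow r\equiv_{ae} s$.) *)

theory Defs
  imports Complex_Main
begin

datatype sterm = Var | Zero | One | Plus sterm sterm | Times sterm sterm
  | Neg sterm | Inv sterm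

text \<open>Interpretation in Q_0: rationals with total inverse (inverse 0 = 0 in Isabelle's rat).\<close>
primrec eval :: "sterm \<Rightarrow> rat \<Rightarrow> rat" where
  "eval Var q = q"
| "eval Zero q = 0"
| "eval One q = 1"
| "eval (Plus a b) q = eval a q + eval b q"
| "eval (Times a b) q = eval a q * eval b q"
| "eval (Neg a) q = - eval a q"
| "eval (Inv a) q = (if eval a q = 0 then 0 else 1 / eval a q)"

end

theory Submission
  imports Defs "HOL-Computational_Algebra.Polynomial"
begin

definition ratf :: "sterm \<Rightarrow> bool" where
  "ratf t \<longleftrightarrow> (\<exists>P D. D \<noteq> 0 \<and>
     (\<forall>\<^sub>F q in cofinite. poly D q \<noteq> 0 \<and> eval t q = poly P q / poly D q))"

lemma nz_cof: "(D::rat poly) \<noteq> 0 \<Longrightarrow> \<forall>\<^sub>F q in cofinite. poly D q \<noteq> 0"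
  unfolding eventually_cofinite using poly_roots_finite by auto

lemma ratf_all: "ratf t"
proof (induction t)
  case Var
  show ?case unfolding ratf_def
    by (rule exI[of _ "[:0,1:]"], rule exI[of _ 1]) simp
next
  case Zero
  show ?case unfolding ratf_def
    by (rule exI[of _ 0], rule exI[of _ 1]) simp
next
  case One
  show ?case unfolding ratf_def
    by (rule exI[of _ 1], rule exI[of _ 1]) simp
next
  case (Plus a b)
  from Plus.IH obtain P1 D1 P2 D2 where d: "D1 \<noteq> 0" "D2 \<noteq> 0"
    and e1: "\<forall>\<^sub>F q in cofinite. poly D1 q \<noteq> 0 \<and> eval a q = poly P1 q / poly D1 q"
    and e2: "\<forall>\<^sub>F q in cofinite. poly D2 q \<noteq> 0 \<and> eval b q = poly P2 q / poly D2 q"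
    unfolding ratf_def by blast
  have "\<forall>\<^sub>F q in cofinite. poly (D1*D2) q \<noteq> 0 \<and> eval (Plus a b) q = poly (P1*D2+P2*D1) q / poly (D1*D2) q"
    using e1 e2 by eventually_elim (auto simp: field_simps)
  then show ?case unfolding ratf_def using d by (intro exI[of _ "P1*D2+P2*D1"] exI[of _ "D1*D2"]) auto
next
  case (Times a b)
  from Times.IH obtain P1 D1 P2 D2 where d: "D1 \<noteq> 0" "D2 \<noteq> 0"
    and e1: "\<forall>\<^sub>F q in cofinite. poly D1 q \<noteq> 0 \<and> eval a q = poly P1 q / poly D1 q"
    and e2: "\<forall>\<^sub>F q in cofinite. poly D2 q \<noteq> 0 \<and> eval b q = poly P2 q / poly D2 q"
    unfolding ratf_def by blast
  have "\<forall>\<^sub>F q in cofinite. poly (D1*D2) q \<noteq> 0 \<and> eval (Times a b) q = poly (P1*P2) q / poly (D1*D2) q"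
    using e1 e2 by eventually_elim (auto simp: field_simps)
  then show ?case unfolding ratf_def using d by (intro exI[of _ "P1*P2"] exI[of _ "D1*D2"]) auto
next
  case (Neg a)
  from Neg.IH obtain P1 D1 where d: "D1 \<noteq> 0"
    and e1: "\<forall>\<^sub>F q in cofinite. poly D1 q \<noteq> 0 \<and> eval a q = poly P1 q / poly D1 q"
    unfolding ratf_def by blast
  have "\<forall>\<^sub>F q in cofinite. poly D1 q \<noteq> 0 \<and> eval (Neg a) q = poly (-P1) q / poly D1 q"
    using e1 by eventually_elim auto
  then show ?case unfolding ratf_def using d by (intro exI[of _ "-P1"] exI[of _ "D1"]) auto
next
  case (Inv a)
  from Inv.IH obtain P1 D1 where d: "D1 \<noteq> 0"
    and e1: "\<forall>\<^sub>F q in cofinite. poly D1 q \<noteq> 0 \<and> eval a q = poly P1 q / poly D1 q"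
    unfolding ratf_def by blast
  show ?case
  proof (cases "P1 = 0")
    case True
    have "\<forall>\<^sub>F q in cofinite. poly 1 q \<noteq> (0::rat) \<and> eval (Inv a) q = poly 0 q / poly 1 q"
      using e1 by eventually_elim (auto simp: True)
    then show ?thesis unfolding ratf_def by (intro exI[of _ "0"] exI[of _ "1"]) auto
  next
    case False
    have "\<forall>\<^sub>F q in cofinite. poly P1 q \<noteq> 0 \<and> eval (Inv a) q = poly D1 q / poly P1 q"
      using e1 nz_cof[OF False] by eventually_elim auto
    then show ?thesis unfolding ratf_def using False by (intro exI[of _ "D1"] exI[of _ "P1"]) auto
  qed
qed

theorem theorem3:
  fixes r s :: sterm
  assumes "infinite {q :: rat. eval r q = eval s q}"
  shows "finite {q :: rat. eval r q \<noteq> eval s q}"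
proof -
  obtain P1 D1 P2 D2 where
        e1: "\<forall>\<^sub>F q in cofinite. poly D1 q \<noteq> 0 \<and> eval r q = poly P1 q / poly D1 q"
    and e2: "\<forall>\<^sub>F q in cofinite. poly D2 q \<noteq> 0 \<and> eval s q = poly P2 q / poly D2 q"
    using ratf_all[of r] ratf_all[of s] unfolding ratf_def by blast
  define N where "N = P1*D2 - P2*D1"
  have key: "\<forall>\<^sub>F q in cofinite. (eval r q = eval s q) = (poly N q = 0)"
    using e1 e2 by eventually_elim (auto simp: N_def field_simps)
  have "N = 0"
  proof (rule ccontr)
    assume "N \<noteq> 0"
    have "\<forall>\<^sub>F q in cofinite. eval r q \<noteq> eval s q"
      using key nz_cof[OF \<open>N \<noteq> 0\<close>] by eventually_elim auto
    with assms show False unfolding eventually_cofinite by simp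
  qed
  have "\<forall>\<^sub>F q in cofinite. eval r q = eval s q"
    using key by eventually_elim (simp add: \<open>N = 0\<close>)
  then show ?thesis unfolding eventually_cofinite by simp
qed

end
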